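(* Let $1<p<2$ and let $A,B$ be finite-dimensional Hilbert spaces with orthonormal bases $\{|j\rangle\}$ of $A$ and $\{|k\rangle\}$ of $B$. For a unit vector $|\varphi\rangle=\sum_{j,k}\varphi_{jk}|j\rangle|k\rangle$ put $q_j=\sum_k|\varphi_{jk}|^2$ and $$g_p(|\varphi\rangle)=\frac{1}{1-p}\ln\sum_j q_j^p .$$ Regarding $g_p$ as a function of the real coordinates $(\operatorname{Re}\varphi_{jk},\operatorname{Im}\varphi_{jk})\in\mathbb{R}^{2|A||B|}$, at every unit vector $|\varphi\rangle$ one has $$\nabla g_p\cdot\nabla g_p=\frac{4p^2}{(1-p)^2}\,\frac{\sum_j q_j^{2p-1}}{\left(\sum_j q_j^p\right)^2}\le \frac{4p^2}{(1-p)^2}\,|A|^{p-1}.$$ Consequently $g_p$ is Lipschitz on the unit sphere of $A\otimes B$ (with respect to the Euclidean norm) with constant at most $\frac{2p}{p-1}|A|^{(p-1)/2}$.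
   Context: $|A|$ denotes the dimension of $A$; logarithms are natural. *)

theory Defs
  imports "HOL-Analysis.Analysis"
begin

text \<open>A state of A \<otimes> B is a vector of coefficients indexed by (j,k); the type
  complex ^ ('a \<times> 'b) carries the real Euclidean inner product
  sum of Re(x * cnj y), i.e. the Euclidean structure of R^(2|A||B|).\<close>

definition marg_q :: "complex ^ ('a::finite \<times> 'b::finite) \<Rightarrow> 'a \<Rightarrow> real" where
  "marg_q \<phi> j = (\<Sum>k\<in>UNIV. (cmod (\<phi> $ (j, k)))\<^sup>2)"

definition renyi_g :: "real \<Rightarrow> complex ^ ('a::finite \<times> 'b::finite) \<Rightarrow> real" where
  "renyi_g p \<phi> = 1 / (1 - p) * ln (\<Sum>j\<in>UNIV. marg_q \<phi> j powr p)"

end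

theory Submission
  imports Defs
begin


lemma sum_pair_UNIV:
  "(\<Sum>i\<in>(UNIV::('a::finite\<times>'b::finite) set). f i) = (\<Sum>j\<in>UNIV. \<Sum>k\<in>UNIV. f (j,k))"
  by (simp add: sum.cartesian_product flip: UNIV_Times_UNIV)

lemma norm_sq_marg:
  fixes \<phi> :: "complex ^ ('a::finite \<times> 'b::finite)"
  shows "(norm \<phi>)\<^sup>2 = (\<Sum>j\<in>UNIV. marg_q \<phi> j)"
  unfolding norm_vec_def L2_set_def marg_q_def
  by (simp add: sum_nonneg sum_pair_UNIV)

lemma marg_nonneg: "0 \<le> marg_q \<phi> j"
  unfolding marg_q_def by (simp add: sum_nonneg)

lemma tangent_powr:
  fixes p c x :: real
  assumes "1 \<le> p" "0 < c" "0 \<le> x"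
  shows "x powr p - c powr p \<ge> p * c powr (p - 1) * (x - c)"
proof (cases "x = 0")
  case True
  have e: "p * c powr (p-1) * (x - c) = - (p * c powr p)" using assms True by (simp add: powr_diff)
  have "c powr p \<le> p * c powr p" using assms by simp
  moreover have "x powr p - c powr p = - (c powr p)" using True by simp
  ultimately show ?thesis using e by linarith
next
  case False
  have d: "((\<lambda>z. z powr p) has_field_derivative p * c powr (p - 1)) (at c within {0<..})"
    using has_real_derivative_powr[OF assms(2)] by (rule has_field_derivative_at_within)
  have "x powr p - c powr p \<ge> p * c powr (p - 1) * (x - c)"
    by (rule convex_on_imp_above_tangent[OF powr_convex[OF assms(1)] _ _ _ d])
       (use assms False in \<open>auto simp: interior_open\<close>)
  then show ?thesis .
qed

lemma sum_powr_lower: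
  fixes f :: "'a::finite \<Rightarrow> real"
  assumes "1 \<le> p" "\<And>j. 0 \<le> f j" "(\<Sum>j\<in>UNIV. f j) = 1"
  shows "real CARD('a) powr (1 - p) \<le> (\<Sum>j\<in>UNIV. f j powr p)"
proof -
  define d where "d = real CARD('a)"
  have dpos: "d > 0" unfolding d_def by simp
  define c where "c = 1 / d"
  have cpos: "c > 0" unfolding c_def using dpos by simp
  have t: "c powr p + p * c powr (p-1) * (f j - c) \<le> f j powr p" for j
    using tangent_powr[OF assms(1) cpos assms(2)[of j]] by linarith
  have "(\<Sum>j\<in>UNIV. c powr p + p * c powr (p-1) * (f j - c)) \<le> (\<Sum>j\<in>UNIV. f j powr p)"
    by (rule sum_mono) (rule t)
  moreover have "(\<Sum>j\<in>UNIV. c powr p + p * c powr (p-1) * (f j - c))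
      = d * c powr p + p * c powr (p-1) * ((\<Sum>j\<in>UNIV. f j) - d * c)"
    by (simp add: sum.distrib sum_subtractf d_def flip: sum_distrib_left)
  moreover have "d * c = 1" unfolding c_def using dpos by simp
  moreover have "d * c powr p = d powr (1 - p)"
    unfolding c_def using dpos by (simp add: powr_divide powr_diff)
  ultimately show ?thesis using assms(3) unfolding d_def by simp
qed

lemma powr_lip:
  fixes p x y :: real
  assumes "1 \<le> p" "0 \<le> x" "x \<le> 1" "0 \<le> y" "y \<le> 1"
  shows "\<bar>x powr p - y powr p\<bar> \<le> p * \<bar>x - y\<bar>"
proof -
  have main: "b powr p - a powr p \<le> p * (b - a) \<and> a powr p \<le> b powr p"
    if "0 \<le> a" "a \<le> b" "b \<le> 1" for a b :: real
  proof (cases "b = 0")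
    case True then show ?thesis using that by simp
  next
    case False
    then have bpos: "b > 0" using that by simp
    have "a powr p - b powr p \<ge> p * b powr (p - 1) * (a - b)"
      by (rule tangent_powr[OF assms(1) bpos that(1)])
    moreover have "b powr (p - 1) \<le> 1"
      using that bpos assms(1) by (simp add: powr_le1)
    moreover have "p * b powr (p - 1) * (b - a) \<le> p * (b - a)"
      using calculation(2) that assms(1) mult_right_mono[of "b powr (p - 1)" 1 "b - a"]
      by (simp add: mult.assoc mult_left_mono)
    moreover have "p * b powr (p - 1) * (a - b) = - (p * b powr (p - 1) * (b - a))"
      by (simp add: algebra_simps)
    ultimately have "b powr p - a powr p \<le> p * (b - a)" by linarith
    moreover have "a powr p \<le> b powr p" using that assms(1) by (intro powr_mono2) auto
    ultimately show ?thesis by simp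
  qed
  show ?thesis
  proof (cases "x \<le> y")
    case True then show ?thesis using main[of x y] assms by auto
  next
    case False then show ?thesis using main[of y x] assms by auto
  qed
qed

lemma ln_diff_le:
  fixes m s t :: real
  assumes "0 < m" "m \<le> s" "m \<le> t"
  shows "\<bar>ln s - ln t\<bar> \<le> \<bar>s - t\<bar> / m"
proof -
  have main: "ln a - ln b \<le> (a - b) / m" if "m \<le> a" "m \<le> b" "b \<le> a" for a b
  proof -
    have "ln a - ln b = ln (a / b)" using that assms by (simp add: ln_div)
    also have "\<dots> \<le> a / b - 1" using that assms by (intro ln_le_minus_one) simp
    also have "\<dots> = (a - b) / b" using that assms by (simp add: field_simps)
    also have "\<dots> \<le> (a - b) / m" using that assms by (intro divide_left_mono) auto
    finally show ?thesis .
  qed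
  show ?thesis
  proof (cases "t \<le> s")
    case True
    then have "ln t \<le> ln s" using assms by simp
    then show ?thesis using main[of s t] True assms by simp
  next
    case False
    then have "ln s \<le> ln t" using assms by simp
    then show ?thesis using main[of t s] False assms by simp
  qed
qed

definition blk :: "complex ^ ('a::finite \<times> 'b::finite) \<Rightarrow> 'a \<Rightarrow> complex ^ 'b" where
  "blk \<phi> j = (\<chi> k. \<phi> $ (j, k))"

lemma marg_blk: "marg_q \<phi> j = (norm (blk \<phi> j))\<^sup>2"
  unfolding marg_q_def norm_vec_def L2_set_def blk_def
  by (simp add: sum_nonneg)

lemma norm_blk: "norm (\<phi> - \<psi>) = L2_set (\<lambda>j. norm (blk \<phi> j - blk \<psi> j)) UNIV"
  unfolding norm_vec_def L2_set_def blk_def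
  by (simp add: sum_nonneg sum_pair_UNIV)

lemma sum_marg_1:
  fixes \<phi> :: "complex ^ ('a::finite \<times> 'b::finite)"
  assumes "norm \<phi> = 1"
  shows "(\<Sum>j\<in>UNIV. marg_q \<phi> j) = 1"
  using norm_sq_marg[of \<phi>] assms by simp

lemma marg_le1:
  fixes \<phi> :: "complex ^ ('a::finite \<times> 'b::finite)"
  assumes "norm \<phi> = 1"
  shows "marg_q \<phi> j \<le> 1"
proof -
  have "marg_q \<phi> j \<le> (\<Sum>j\<in>UNIV. marg_q \<phi> j)"
    by (rule member_le_sum) (auto simp: marg_nonneg)
  then show ?thesis using sum_marg_1[OF assms] by simp
qed

lemma S_lower:
  fixes \<phi> :: "complex ^ ('a::finite \<times> 'b::finite)"
  assumes "norm \<phi> = 1" "1 \<le> p"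
  shows "real CARD('a) powr (1 - p) \<le> (\<Sum>j\<in>UNIV. marg_q \<phi> j powr p)"
  by (rule sum_powr_lower[OF assms(2) marg_nonneg sum_marg_1[OF assms(1)]])

lemma powr_sq_sqrt:
  fixes q :: real
  assumes "0 \<le> q"
  shows "q powr p = (sqrt q powr p)\<^sup>2"
proof (cases "q = 0")
  case True then show ?thesis by simp
next
  case False
  then have "sqrt q powr p = q powr (p/2)"
    using assms by (simp add: powr_powr flip: powr_half_sqrt)
  then show ?thesis using assms False
    by (simp add: power2_eq_square flip: powr_add)
qed

lemma sqrtS_eq:
  fixes \<phi> :: "complex ^ ('a::finite \<times> 'b::finite)"
  shows "sqrt (\<Sum>j\<in>UNIV. marg_q \<phi> j powr p) = L2_set (\<lambda>j. norm (blk \<phi> j) powr p) UNIV"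
  unfolding L2_set_def
  by (simp add: marg_blk powr_sq_sqrt[of "(norm (blk \<phi> j))\<^sup>2" p for j])

lemma L2_diff:
  "\<bar>L2_set u A - L2_set v A\<bar> \<le> L2_set (\<lambda>j. \<bar>u j - v j\<bar>) A"
proof -
  have e: "L2_set (\<lambda>j. \<bar>u j - v j\<bar>) A = L2_set (\<lambda>j. u j - v j) A"
          "L2_set (\<lambda>j. \<bar>u j - v j\<bar>) A = L2_set (\<lambda>j. v j - u j) A"
    unfolding L2_set_def by (simp_all add: power2_commute)
  have "L2_set u A \<le> L2_set (\<lambda>j. u j - v j) A + L2_set v A"
    using L2_set_triangle_ineq[of "\<lambda>j. u j - v j" v A] by simp
  moreover have "L2_set v A \<le> L2_set (\<lambda>j. v j - u j) A + L2_set u A"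
    using L2_set_triangle_ineq[of "\<lambda>j. v j - u j" u A] by simp
  ultimately show ?thesis using e by linarith
qed

lemma renyi_lip:
  assumes "1 < p"
  shows "(2 * p / (p - 1) * real CARD('a) powr ((p - 1) / 2))-lipschitz_on
           {\<phi> :: complex ^ ('a::finite \<times> 'b::finite). norm \<phi> = 1} (renyi_g p)"
proof (rule lipschitz_onI)
  define d where "d = real CARD('a)"
  have dpos: "d > 0" unfolding d_def by simp
  define m where "m = d powr ((1 - p) / 2)"
  have mpos: "m > 0" unfolding m_def using dpos by simp
  have minv: "1 / m = d powr ((p - 1) / 2)"
  proof -
    have "1 / m = d powr (- ((1 - p) / 2))"
      unfolding m_def using dpos by (simp add: powr_minus_divide[symmetric] flip: powr_minus)
    moreover have "- ((1 - p) / 2) = (p - 1) / 2" by (simp add: field_simps)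
    ultimately show ?thesis by simp
  qed
  show "0 \<le> 2 * p / (p - 1) * real CARD('a) powr ((p - 1) / 2)" using assms by simp
  fix \<phi> \<psi> :: "complex ^ ('a \<times> 'b)"
  assume "\<phi> \<in> {\<phi>. norm \<phi> = 1}" "\<psi> \<in> {\<phi>. norm \<phi> = 1}"
  then have n1: "norm \<phi> = 1" "norm \<psi> = 1" by auto
  define S where "S = (\<lambda>x :: complex ^ ('a \<times> 'b). \<Sum>j\<in>UNIV. marg_q x j powr p)"
  have Slow: "d powr (1 - p) \<le> S x" if "norm x = 1" for x
    unfolding S_def d_def using S_lower[OF that] assms by simp
  have sqlow: "m \<le> sqrt (S x)" if "norm x = 1" for x
    unfolding m_def using Slow[OF that] dpos by (simp add: powr_half_sqrt_powr)
  have gS: "renyi_g p x = 2 / (1 - p) * ln (sqrt (S x))" if "norm x = 1" for x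
  proof -
    have "S x > 0" using Slow[OF that] dpos by (smt (verit) powr_gt_zero)
    then show ?thesis unfolding renyi_g_def S_def using assms by (simp add: ln_sqrt field_simps)
  qed
  have bnd1: "\<bar>norm (blk \<phi> j) powr p - norm (blk \<psi> j) powr p\<bar> \<le> p * norm (blk \<phi> j - blk \<psi> j)" for j
  proof -
    have le1: "norm (blk x j) \<le> 1" if "norm x = 1" for x
      using marg_le1[OF that, of j] by (simp add: marg_blk power_le_one_iff)
    have "\<bar>norm (blk \<phi> j) powr p - norm (blk \<psi> j) powr p\<bar> \<le> p * \<bar>norm (blk \<phi> j) - norm (blk \<psi> j)\<bar>"
      using assms le1[OF n1(1)] le1[OF n1(2)] by (intro powr_lip) auto
    also have "\<dots> \<le> p * norm (blk \<phi> j - blk \<psi> j)"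
      using assms norm_triangle_ineq3 by (intro mult_left_mono) auto
    finally show ?thesis .
  qed
  have "\<bar>sqrt (S \<phi>) - sqrt (S \<psi>)\<bar> \<le>
        L2_set (\<lambda>j. \<bar>norm (blk \<phi> j) powr p - norm (blk \<psi> j) powr p\<bar>) UNIV"
    unfolding S_def sqrtS_eq by (rule L2_diff)
  also have "\<dots> \<le> L2_set (\<lambda>j. p * norm (blk \<phi> j - blk \<psi> j)) UNIV"
    by (rule L2_set_mono) (use bnd1 in auto)
  also have "\<dots> = p * norm (\<phi> - \<psi>)"
    using assms by (simp add: norm_blk L2_set_right_distrib)
  finally have sq: "\<bar>sqrt (S \<phi>) - sqrt (S \<psi>)\<bar> \<le> p * norm (\<phi> - \<psi>)" .
  have "\<bar>ln (sqrt (S \<phi>)) - ln (sqrt (S \<psi>))\<bar> \<le> \<bar>sqrt (S \<phi>) - sqrt (S \<psi>)\<bar> / m"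
    by (rule ln_diff_le[OF mpos sqlow[OF n1(1)] sqlow[OF n1(2)]])
  also have "\<dots> \<le> p * norm (\<phi> - \<psi>) / m"
    using sq mpos by (simp add: divide_right_mono)
  finally have lnb: "\<bar>ln (sqrt (S \<phi>)) - ln (sqrt (S \<psi>))\<bar> \<le> p * norm (\<phi> - \<psi>) * d powr ((p - 1) / 2)"
    using minv by (metis times_divide_eq_right mult_1_right)
  have "dist (renyi_g p \<phi>) (renyi_g p \<psi>) = 2 / (p - 1) * \<bar>ln (sqrt (S \<phi>)) - ln (sqrt (S \<psi>))\<bar>"
  proof -
    have "renyi_g p \<phi> - renyi_g p \<psi> = 2 / (1 - p) * (ln (sqrt (S \<phi>)) - ln (sqrt (S \<psi>)))"
      by (simp add: gS n1 right_diff_distrib)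
    moreover have "\<bar>2 / (1 - p)\<bar> = 2 / (p - 1)" using assms by (simp add: abs_div)
    ultimately show ?thesis unfolding dist_real_def by (simp only: abs_mult)
  qed
  also have "\<dots> \<le> 2 / (p - 1) * (p * norm (\<phi> - \<psi>) * d powr ((p - 1) / 2))"
    using assms lnb by (intro mult_left_mono) auto
  also have "\<dots> = 2 * p / (p - 1) * real CARD('a) powr ((p - 1) / 2) * dist \<phi> \<psi>"
    by (simp add: d_def dist_norm)
  finally show "dist (renyi_g p \<phi>) (renyi_g p \<psi>) \<le> 2 * p / (p - 1) * real CARD('a) powr ((p - 1) / 2) * dist \<phi> \<psi>" .
qed

lemma has_derivative_nth[derivative_intros]:
  "((\<lambda>x. x $ i) has_derivative (\<lambda>h. h $ i)) F"
  by (rule bounded_linear_imp_has_derivative[OF bounded_linear_vec_nth])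

lemma marg_alt: "marg_q \<phi> j = (\<Sum>k\<in>UNIV. \<phi> $ (j, k) \<bullet> \<phi> $ (j, k))"
  unfolding marg_q_def by (simp add: power2_norm_eq_inner)

lemma marg_deriv:
  "((\<lambda>\<psi>. marg_q \<psi> j) has_derivative (\<lambda>h. \<Sum>k\<in>UNIV. 2 * (\<phi> $ (j, k) \<bullet> h $ (j, k)))) (at \<phi>)"
  unfolding marg_alt
  by (auto intro!: derivative_eq_intros simp: inner_commute)

lemma marg_le_norm:
  fixes h :: "complex ^ ('a::finite \<times> 'b::finite)"
  shows "marg_q h j \<le> (norm h)\<^sup>2"
  unfolding norm_sq_marg by (rule member_le_sum) (auto simp: marg_nonneg)

lemma marg_zero_deriv:
  fixes \<phi> :: "complex ^ ('a::finite \<times> 'b::finite)"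
  assumes "1 < p" "marg_q \<phi> j = 0"
  shows "((\<lambda>\<psi>. marg_q \<psi> j powr p) has_derivative (\<lambda>h. 0)) (at \<phi>)"
proof -
  have z: "\<phi> $ (j, k) = 0" for k
  proof -
    have "(\<Sum>k\<in>UNIV. (cmod (\<phi> $ (j, k)))\<^sup>2) = 0" using assms(2) unfolding marg_q_def .
    then have "(cmod (\<phi> $ (j, k)))\<^sup>2 = 0" by (simp add: sum_nonneg_eq_0_iff)
    then show ?thesis by simp
  qed
  have mh: "marg_q (\<phi> + h) j = marg_q h j" for h
    unfolding marg_q_def by (simp add: z)
  have lim: "((\<lambda>h. norm h powr (2 * p - 1)) \<longlongrightarrow> 0) (at (0 :: complex ^ ('a \<times> 'b)))"
    by (rule tendsto_zero_powrI) (use assms in \<open>auto intro!: tendsto_eq_intros\<close>)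
  have "((\<lambda>h. norm (marg_q (\<phi> + h) j powr p - marg_q \<phi> j powr p - 0) / norm h) \<longlongrightarrow> 0)
          (at (0 :: complex ^ ('a \<times> 'b)))"
  proof (rule tendsto_sandwich[OF _ _ tendsto_const lim])
    show "\<forall>\<^sub>F h in at 0. 0 \<le> norm (marg_q (\<phi> + h) j powr p - marg_q \<phi> j powr p - 0) / norm h"
      by simp
    show "\<forall>\<^sub>F h in at 0. norm (marg_q (\<phi> + h) j powr p - marg_q \<phi> j powr p - 0) / norm h
           \<le> norm h powr (2 * p - 1)"
      unfolding eventually_at_filter
    proof (rule always_eventually, intro allI impI)
      fix h :: "complex ^ ('a \<times> 'b)"
      assume "h \<noteq> 0"
      then have np: "norm h > 0" by simp
      have "norm (marg_q (\<phi> + h) j powr p - marg_q \<phi> j powr p - 0) = marg_q h j powr p"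
        using assms by (simp add: mh)
      also have "\<dots> \<le> ((norm h)\<^sup>2) powr p"
        using assms by (intro powr_mono2) (auto simp: marg_nonneg marg_le_norm)
      also have "\<dots> = norm h powr (2 * p - 1) * norm h"
        using np by (simp add: powr_powr powr_diff flip: powr_numeral)
      finally show "norm (marg_q (\<phi> + h) j powr p - marg_q \<phi> j powr p - 0) / norm h
           \<le> norm h powr (2 * p - 1)"
        using np by (simp add: divide_le_eq)
    qed
  qed
  then show ?thesis
    unfolding has_derivative_at by simp
qed

lemma marg_powr_deriv:
  fixes \<phi> :: "complex ^ ('a::finite \<times> 'b::finite)"
  assumes "1 < p"
  shows "((\<lambda>\<psi>. marg_q \<psi> j powr p) has_derivative
           (\<lambda>h. p * marg_q \<phi> j powr (p - 1) * (\<Sum>k\<in>UNIV. 2 * (\<phi> $ (j, k) \<bullet> h $ (j, k))))) (at \<phi>)"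
proof (cases "marg_q \<phi> j = 0")
  case True
  then show ?thesis using marg_zero_deriv[OF assms True] by simp
next
  case False
  then have qp: "marg_q \<phi> j > 0" using marg_nonneg[of \<phi> j] by simp
  show ?thesis
  proof (rule has_derivative_eq_rhs[OF has_derivative_powr[OF marg_deriv has_derivative_const qp]])
    show "(\<lambda>h. marg_q \<phi> j powr p * (0 * ln (marg_q \<phi> j) + (\<Sum>k\<in>UNIV. 2 * (\<phi> $ (j, k) \<bullet> h $ (j, k))) * p / marg_q \<phi> j)) =
      (\<lambda>h. p * marg_q \<phi> j powr (p - 1) * (\<Sum>k\<in>UNIV. 2 * (\<phi> $ (j, k) \<bullet> h $ (j, k))))"
      using qp by (auto simp: powr_diff field_simps)
  qed simp
qed

lemma inner_of_real_mult: "(of_real r * z) \<bullet> (w::complex) = r * (z \<bullet> w)"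
  by (simp flip: scaleR_conv_of_real)

lemma renyi_deriv:
  fixes \<phi> :: "complex ^ ('a::finite \<times> 'b::finite)"
  assumes "1 < p" "norm \<phi> = 1"
  defines "S \<equiv> (\<Sum>j\<in>UNIV. marg_q \<phi> j powr p)"
  defines "c \<equiv> 2 * p / ((1 - p) * S)"
  defines "G \<equiv> (\<chi> i. of_real (c * marg_q \<phi> (fst i) powr (p - 1)) * \<phi> $ i)"
  shows "(renyi_g p has_derivative (\<lambda>h. G \<bullet> h)) (at \<phi>)"
proof -
  have Spos: "S > 0"
    using S_lower[OF assms(2), of p] assms(1) unfolding S_def
    by (smt (verit) powr_gt_zero of_nat_0_less_iff zero_less_card_finite)
  have d: "((\<lambda>\<psi>. \<Sum>j\<in>UNIV. marg_q \<psi> j powr p) has_derivative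
      (\<lambda>h. \<Sum>j\<in>UNIV. p * marg_q \<phi> j powr (p - 1) * (\<Sum>k\<in>UNIV. 2 * (\<phi> $ (j, k) \<bullet> h $ (j, k))))) (at \<phi>)"
    by (rule has_derivative_sum) (rule marg_powr_deriv[OF assms(1)])
  have main: "((\<lambda>\<psi>. 1 / (1 - p) * ln (\<Sum>j\<in>UNIV. marg_q \<psi> j powr p)) has_derivative
      (\<lambda>h. 1 / (1 - p) * ((\<Sum>j\<in>UNIV. p * marg_q \<phi> j powr (p - 1) * (\<Sum>k\<in>UNIV. 2 * (\<phi> $ (j, k) \<bullet> h $ (j, k)))) * inverse S))) (at \<phi>)"
    unfolding S_def
    by (rule has_derivative_mult_right[OF has_derivative_ln[OF _ d]]) (use Spos S_def in simp)
  have eq: "(\<lambda>h. 1 / (1 - p) * ((\<Sum>j\<in>UNIV. p * marg_q \<phi> j powr (p - 1) * (\<Sum>k\<in>UNIV. 2 * (\<phi> $ (j, k) \<bullet> h $ (j, k)))) * inverse S)) = (\<lambda>h. G \<bullet> h)"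
  proof
    fix h :: "complex ^ ('a \<times> 'b)"
    have "G \<bullet> h = (\<Sum>i\<in>UNIV. c * marg_q \<phi> (fst i) powr (p - 1) * (\<phi> $ i \<bullet> h $ i))"
      unfolding G_def inner_vec_def by (simp add: inner_of_real_mult del: of_real_mult)
    also have "\<dots> = (\<Sum>j\<in>UNIV. \<Sum>k\<in>UNIV. c * marg_q \<phi> j powr (p - 1) * (\<phi> $ (j, k) \<bullet> h $ (j, k)))"
      by (simp add: sum_pair_UNIV)
    also have "\<dots> = 1 / (1 - p) * ((\<Sum>j\<in>UNIV. p * marg_q \<phi> j powr (p - 1) * (\<Sum>k\<in>UNIV. 2 * (\<phi> $ (j, k) \<bullet> h $ (j, k)))) * inverse S)"
    proof -
      have "(\<Sum>j\<in>UNIV. \<Sum>k\<in>UNIV. c * marg_q \<phi> j powr (p - 1) * (\<phi> $ (j, k) \<bullet> h $ (j, k)))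
         = (\<Sum>j\<in>UNIV. \<Sum>k\<in>UNIV. 1 / (1 - p) * ((p * marg_q \<phi> j powr (p - 1) * (2 * (\<phi> $ (j, k) \<bullet> h $ (j, k)))) * inverse S))"
        unfolding c_def using Spos assms(1) by (intro sum.cong refl) (simp add: field_simps)
      also have "\<dots> = 1 / (1 - p) * ((\<Sum>j\<in>UNIV. p * marg_q \<phi> j powr (p - 1) * (\<Sum>k\<in>UNIV. 2 * (\<phi> $ (j, k) \<bullet> h $ (j, k)))) * inverse S)"
        by (simp add: sum_distrib_left sum_distrib_right)
      finally show ?thesis .
    qed
    finally show "1 / (1 - p) * ((\<Sum>j\<in>UNIV. p * marg_q \<phi> j powr (p - 1) * (\<Sum>k\<in>UNIV. 2 * (\<phi> $ (j, k) \<bullet> h $ (j, k)))) * inverse S) = G \<bullet> h"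
      by simp
  qed
  have r: "renyi_g p = (\<lambda>\<psi>. 1 / (1 - p) * ln (\<Sum>j\<in>UNIV. marg_q \<psi> j powr p))"
    by (simp add: renyi_g_def fun_eq_iff)
  show ?thesis unfolding r using main eq by simp
qed

lemma powr_sq_mult:
  fixes q :: real
  assumes "0 \<le> q"
  shows "(q powr (p - 1))\<^sup>2 * q = q powr (2 * p - 1)"
proof (cases "q = 0")
  case True then show ?thesis by simp
next
  case False
  then have "q > 0" using assms by simp
  have "q powr (2 * p - 1) = q powr ((p - 1) + (p - 1) + 1)"
    by (rule arg_cong[where f="\<lambda>e. q powr e"]) simp
  also have "\<dots> = q powr (p - 1) * q powr (p - 1) * q"
    unfolding powr_add using \<open>q > 0\<close> by simp
  finally show ?thesis by (simp add: power2_eq_square)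
qed

lemma G_inner:
  fixes \<phi> :: "complex ^ ('a::finite \<times> 'b::finite)"
  assumes "1 < p" "S > 0"
  defines "c \<equiv> 2 * p / ((1 - p) * S)"
  defines "G \<equiv> (\<chi> i. of_real (c * marg_q \<phi> (fst i) powr (p - 1)) * \<phi> $ i)"
  shows "G \<bullet> G = 4 * p\<^sup>2 / (1 - p)\<^sup>2 * ((\<Sum>j\<in>UNIV. marg_q \<phi> j powr (2 * p - 1)) / S\<^sup>2)"
proof -
  have sq: "(of_real r * z) \<bullet> (of_real r * z) = r\<^sup>2 * (cmod z)\<^sup>2" for r :: real and z :: complex
    by (simp add: power2_norm_eq_inner[symmetric] norm_mult power_mult_distrib del: of_real_mult)
  have "G \<bullet> G = (\<Sum>i\<in>UNIV. (c * marg_q \<phi> (fst i) powr (p - 1))\<^sup>2 * (cmod (\<phi> $ i))\<^sup>2)"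
    unfolding G_def inner_vec_def by (simp only: vec_lambda_beta sq)
  also have "\<dots> = (\<Sum>j\<in>UNIV. c\<^sup>2 * ((marg_q \<phi> j powr (p - 1))\<^sup>2 * marg_q \<phi> j))"
    by (simp add: sum_pair_UNIV marg_q_def sum_distrib_left power_mult_distrib mult.assoc)
  also have "\<dots> = c\<^sup>2 * (\<Sum>j\<in>UNIV. marg_q \<phi> j powr (2 * p - 1))"
    by (simp add: powr_sq_mult marg_nonneg sum_distrib_left)
  also have "\<dots> = 4 * p\<^sup>2 / (1 - p)\<^sup>2 * ((\<Sum>j\<in>UNIV. marg_q \<phi> j powr (2 * p - 1)) / S\<^sup>2)"
    unfolding c_def by (simp add: power_divide power_mult_distrib)
  finally show ?thesis .
qed

lemma G_bound:
  fixes \<phi> :: "complex ^ ('a::finite \<times> 'b::finite)"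
  assumes "1 < p" "norm \<phi> = 1"
  shows "4 * p\<^sup>2 / (1 - p)\<^sup>2 * ((\<Sum>j\<in>UNIV. marg_q \<phi> j powr (2 * p - 1)) / (\<Sum>j\<in>UNIV. marg_q \<phi> j powr p)\<^sup>2)
         \<le> 4 * p\<^sup>2 / (1 - p)\<^sup>2 * real CARD('a) powr (p - 1)"
proof (rule mult_left_mono)
  show "0 \<le> 4 * p\<^sup>2 / (1 - p)\<^sup>2" by simp
  define S where "S = (\<Sum>j\<in>UNIV. marg_q \<phi> j powr p)"
  define d where "d = real CARD('a)"
  have dpos: "d > 0" unfolding d_def by simp
  have Sl: "d powr (1 - p) \<le> S" unfolding S_def d_def using S_lower[OF assms(2)] assms(1) by simp
  have Spos: "S > 0" using Sl dpos by (smt (verit) powr_gt_zero)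
  have t: "marg_q \<phi> j powr (2 * p - 1) \<le> marg_q \<phi> j powr p" for j
    using assms marg_le1[OF assms(2), of j] marg_nonneg[of \<phi> j] by (intro powr_mono') auto
  have s1: "(\<Sum>j\<in>UNIV. marg_q \<phi> j powr (2 * p - 1)) \<le> S"
    unfolding S_def by (rule sum_mono) (rule t)
  have "1 = d powr (p - 1) * d powr (1 - p)" using dpos by (simp flip: powr_add)
  also have "\<dots> \<le> d powr (p - 1) * S" using Sl by (intro mult_left_mono) auto
  finally have "1 \<le> d powr (p - 1) * S" .
  then have "S \<le> d powr (p - 1) * S\<^sup>2" using Spos
    by (simp add: power2_eq_square)
  with s1 have "(\<Sum>j\<in>UNIV. marg_q \<phi> j powr (2 * p - 1)) \<le> d powr (p - 1) * S\<^sup>2" by linarith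
  then show "(\<Sum>j\<in>UNIV. marg_q \<phi> j powr (2 * p - 1)) / (\<Sum>j\<in>UNIV. marg_q \<phi> j powr p)\<^sup>2
         \<le> real CARD('a) powr (p - 1)"
    using Spos unfolding S_def[symmetric] d_def[symmetric] by (simp add: divide_le_eq)
qed


theorem mainTheorem2:
  fixes p :: real
  assumes "1 < p" and "p < 2"
  shows "(\<forall>\<phi> :: complex ^ ('a::finite \<times> 'b::finite). norm \<phi> = 1 \<longrightarrow>
            (\<exists>G. (renyi_g p has_derivative (\<lambda>h. G \<bullet> h)) (at \<phi>) \<and>
                 G \<bullet> G = 4 * p\<^sup>2 / (1 - p)\<^sup>2 *
                   ((\<Sum>j\<in>UNIV. marg_q \<phi> j powr (2 * p - 1)) /
                    (\<Sum>j\<in>UNIV. marg_q \<phi> j powr p)\<^sup>2) \<and>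
                 4 * p\<^sup>2 / (1 - p)\<^sup>2 *
                   ((\<Sum>j\<in>UNIV. marg_q \<phi> j powr (2 * p - 1)) /
                    (\<Sum>j\<in>UNIV. marg_q \<phi> j powr p)\<^sup>2)
                   \<le> 4 * p\<^sup>2 / (1 - p)\<^sup>2 * real CARD('a) powr (p - 1)))
         \<and> (\<exists>C. C \<le> 2 * p / (p - 1) * real CARD('a) powr ((p - 1) / 2) \<and>
              C-lipschitz_on {\<phi> :: complex ^ ('a \<times> 'b). norm \<phi> = 1} (renyi_g p))"
proof (intro conjI allI impI)
  fix \<phi> :: "complex ^ ('a \<times> 'b)"
  assume n: "norm \<phi> = 1"
  define S where "S = (\<Sum>j\<in>UNIV. marg_q \<phi> j powr p)"
  have Spos: "S > 0"
    using S_lower[OF n, of p] assms(1) unfolding S_def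
    by (smt (verit) powr_gt_zero of_nat_0_less_iff zero_less_card_finite)
  define c where "c = 2 * p / ((1 - p) * S)"
  define G where "G = (\<chi> i. of_real (c * marg_q \<phi> (fst i) powr (p - 1)) * \<phi> $ i :: complex ^ ('a \<times> 'b))"
  show "\<exists>G. (renyi_g p has_derivative (\<lambda>h. G \<bullet> h)) (at \<phi>) \<and>
                 G \<bullet> G = 4 * p\<^sup>2 / (1 - p)\<^sup>2 *
                   ((\<Sum>j\<in>UNIV. marg_q \<phi> j powr (2 * p - 1)) /
                    (\<Sum>j\<in>UNIV. marg_q \<phi> j powr p)\<^sup>2) \<and>
                 4 * p\<^sup>2 / (1 - p)\<^sup>2 *
                   ((\<Sum>j\<in>UNIV. marg_q \<phi> j powr (2 * p - 1)) /
                    (\<Sum>j\<in>UNIV. marg_q \<phi> j powr p)\<^sup>2)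
                   \<le> 4 * p\<^sup>2 / (1 - p)\<^sup>2 * real CARD('a) powr (p - 1)"
  proof (intro exI conjI)
    show "(renyi_g p has_derivative (\<lambda>h. G \<bullet> h)) (at \<phi>)"
      unfolding G_def c_def S_def by (rule renyi_deriv[OF assms(1) n])
    show "G \<bullet> G = 4 * p\<^sup>2 / (1 - p)\<^sup>2 *
                   ((\<Sum>j\<in>UNIV. marg_q \<phi> j powr (2 * p - 1)) /
                    (\<Sum>j\<in>UNIV. marg_q \<phi> j powr p)\<^sup>2)"
      unfolding G_def c_def using G_inner[OF assms(1) Spos, of \<phi>] unfolding S_def by simp
    show "4 * p\<^sup>2 / (1 - p)\<^sup>2 *
                   ((\<Sum>j\<in>UNIV. marg_q \<phi> j powr (2 * p - 1)) /
                    (\<Sum>j\<in>UNIV. marg_q \<phi> j powr p)\<^sup>2)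
                   \<le> 4 * p\<^sup>2 / (1 - p)\<^sup>2 * real CARD('a) powr (p - 1)"
      by (rule G_bound[OF assms(1) n])
  qed
next
  show "\<exists>C. C \<le> 2 * p / (p - 1) * real CARD('a) powr ((p - 1) / 2) \<and>
              C-lipschitz_on {\<phi> :: complex ^ ('a \<times> 'b). norm \<phi> = 1} (renyi_g p)"
    using renyi_lip[OF assms(1)] by blast
qed

end
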